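(* Let $a<b$ and let $f,g:[a,b]\to\mathbb{R}$ be continuous and differentiable (from the right) at $a$. For $a<x\le b$ write $I_f(a,x)=\frac{1}{x-a}\int_a^x f(t)\,\mathrm{d}t$ and similarly $I_g(a,x)$. If $$\bigl[f(a)\,I_g(a,b)-g(a)\,I_f(a,b)\bigr]\cdot\bigl[f'(a)\,I_g(a,b)-g'(a)\,I_f(a,b)\bigr]> 0,$$ then there exists $\eta\in(a,b)$ such that $$I_g(a,b)\bigl(f(\eta)-I_f(a,\eta)\bigr)=I_f(a,b)\bigl(g(\eta)-I_g(a,\eta)\bigr).$$ *)

theory Defs
  imports "HOL-Analysis.Analysis"
begin

definition int_mean :: "(real \<Rightarrow> real) \<Rightarrow> real \<Rightarrow> real \<Rightarrow> real" where
  "int_mean f a x = integral {a..x} f / (x - a)"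

end

theory Submission
  imports Defs
begin

lemma key:
  fixes h :: "real \<Rightarrow> real"
  assumes ab: "a < b" and hc: "continuous_on {a..b} h"
    and hd: "(h has_real_derivative h') (at a within {a..b})"
    and pos: "h a > 0" "h' > 0" and z: "integral {a..b} h = 0"
  shows "\<exists>\<eta>. a < \<eta> \<and> \<eta> < b \<and> h \<eta> = integral {a..\<eta>} h / (\<eta> - a)"
proof -
  define H where "H x = integral {a..x} h" for x
  define \<phi> where "\<phi> x = H x / (x - a)" for x
  have Hd: "(H has_real_derivative h x) (at x within {a..b})" if "x \<in> {a..b}" for x
    using integral_has_real_derivative[OF hc that] unfolding H_def[abs_def] .
  have Hc: "continuous_on {a..b} H"
    using Hd by (meson DERIV_continuous continuous_at_imp_continuous_on continuous_on_eq_continuous_within)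
  have l1: "((\<lambda>t. h'/2*(t-a)) has_real_derivative h'/2) (at a within {a..b})"
    by (rule derivative_eq_intros refl)+ simp
  have d1: "((\<lambda>t. h t - h'/2*(t-a)) has_real_derivative h' - h'/2) (at a within {a..b})"
    by (rule DERIV_diff[OF hd l1])
  obtain d where d: "d > 0" and dd: "\<And>k. k > 0 \<Longrightarrow> a + k \<in> {a..b} \<Longrightarrow> k < d \<Longrightarrow>
      h a - h'/2*(a-a) < h (a+k) - h'/2*(a+k-a)"
    using has_real_derivative_pos_inc_right[OF d1] pos by auto
  define x0 where "x0 = a + min d (b-a)/2"
  have x0: "a < x0" "x0 < b" "x0 - a < d" using d ab unfolding x0_def by (auto simp: min_def field_simps)
  have lower: "h a + h'/2*(t-a) \<le> h t" if "t \<in> {a..x0}" for t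
  proof (cases "t = a")
    case False
    then have "h a - h'/2*(a-a) < h (a+(t-a)) - h'/2*(a+(t-a)-a)"
      using that x0 by (intro dd) auto
    then show ?thesis by simp
  qed simp
  have int_lower: "((\<lambda>t. h a + h'/2*(t-a)) has_integral
       ((h a*(x0-a) + h'/4*(x0-a)^2) - (h a*(a-a) + h'/4*(a-a)^2))) {a..x0}"
    apply (rule fundamental_theorem_of_calculus)
    using x0 apply simp
    apply (subst has_real_derivative_iff_has_vector_derivative[symmetric])
    apply (rule derivative_eq_intros refl)+
    apply (simp add: field_simps)
    done
  have hint: "(h has_integral H x0) {a..x0}"
    unfolding H_def using hc x0
    by (intro integrable_integral integrable_continuous_interval) (auto elim: continuous_on_subset)
  have "h a*(x0-a) + h'/4*(x0-a)^2 \<le> H x0"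
    using has_integral_le[OF int_lower hint lower] by simp
  moreover have "h'/4*(x0-a)^2 > 0" using pos x0 by simp
  ultimately have phix0: "\<phi> x0 > h a"
    using x0 unfolding \<phi>_def by (simp add: field_simps)
  define \<epsilon> where "\<epsilon> = \<phi> x0 - h a"
  have eps: "\<epsilon> > 0" using phix0 \<epsilon>_def by simp
  have l2: "((\<lambda>t. (h a + \<epsilon>)*(t-a)) has_real_derivative (h a + \<epsilon>)) (at a within {a..b})"
    by (rule derivative_eq_intros refl)+ simp
  have d2: "((\<lambda>t. H t - (h a + \<epsilon>)*(t-a)) has_real_derivative h a - (h a + \<epsilon>)) (at a within {a..b})"
    using ab by (intro DERIV_diff[OF Hd l2]) auto
  obtain e where e: "e > 0" and ee: "\<And>k. k > 0 \<Longrightarrow> a + k \<in> {a..b} \<Longrightarrow> k < e \<Longrightarrow>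
      H a - (h a + \<epsilon>)*(a-a) > H (a+k) - (h a + \<epsilon>)*(a+k-a)"
    using has_real_derivative_neg_dec_right[OF d2] eps by auto
  define c where "c = a + min e (x0-a)/2"
  have c: "a < c" "c < x0" "c - a < e" using e x0 unfolding c_def by (auto simp: min_def field_simps)
  have "H a - (h a + \<epsilon>)*(a-a) > H (a+(c-a)) - (h a + \<epsilon>)*(a+(c-a)-a)"
    using c x0 by (intro ee) auto
  then have "H c < (h a + \<epsilon>) * (c - a)" by (simp add: H_def)
  then have phic: "\<phi> c < \<phi> x0" using c unfolding \<phi>_def \<epsilon>_def by (simp add: field_simps)
  have phib: "\<phi> b = 0" using z unfolding \<phi>_def H_def by simp
  have phic_cont: "continuous_on {c..b} \<phi>"
    unfolding \<phi>_def using c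
    by (intro continuous_intros continuous_on_subset[OF Hc]) auto
  obtain \<eta> where eta: "\<eta> \<in> {c..b}" and mx: "\<And>y. y \<in> {c..b} \<Longrightarrow> \<phi> y \<le> \<phi> \<eta>"
    using continuous_attains_sup[OF _ _ phic_cont] c x0 by auto
  have "\<phi> x0 \<le> \<phi> \<eta>" using mx c x0 by auto
  then have eta2: "c < \<eta>" "\<eta> < b"
    using eta phic phib phix0 pos by (auto simp: le_less)
  have Hd': "(H has_real_derivative h \<eta>) (at \<eta>)"
  proof -
    have "a < \<eta>" using eta2 c by simp
    then have "at \<eta> within {a..b} = at \<eta>" using eta2 by (intro at_within_Icc_at)
    moreover have "\<eta> \<in> {a..b}" using eta2 c by simp
    ultimately show ?thesis using Hd[of \<eta>] by metis
  qed
  have pd: "(\<phi> has_real_derivative (h \<eta> * (\<eta> - a) - H \<eta> * 1) / ((\<eta> - a)*(\<eta>-a))) (at \<eta>)"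
  proof -
    have "((\<lambda>t. t - a) has_real_derivative 1) (at \<eta>)"
      by (rule derivative_eq_intros refl)+ simp
    from DERIV_divide[OF Hd' this] show ?thesis
      unfolding \<phi>_def[abs_def] using eta2 c by simp
  qed
  have "(h \<eta> * (\<eta> - a) - H \<eta> * 1) / ((\<eta> - a)*(\<eta>-a)) = 0"
  proof (rule DERIV_local_max[OF pd])
    show "0 < min (\<eta> - c) (b - \<eta>)" using eta2 by simp
    show "\<forall>y. \<bar>\<eta> - y\<bar> < min (\<eta> - c) (b - \<eta>) \<longrightarrow> \<phi> y \<le> \<phi> \<eta>"
      by (intro allI impI mx) auto
  qed
  moreover have "(\<eta> - a)*(\<eta>-a) \<noteq> 0" using eta2 c by simp
  ultimately have "h \<eta> * (\<eta> - a) = H \<eta>" by simp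
  then have "h \<eta> = H \<eta> / (\<eta> - a)" using eta2 c by (simp add: field_simps)
  then show ?thesis using eta2 c unfolding H_def by (intro exI[of _ \<eta>]) auto
qed

lemma int_lin:
  fixes f g :: "real \<Rightarrow> real" and a b x A B :: real
  assumes "continuous_on {a..b} f" "continuous_on {a..b} g" "a \<le> x" "x \<le> b"
  shows "integral {a..x} (\<lambda>t. B * f t - A * g t) = B * integral {a..x} f - A * integral {a..x} g"
proof -
  have sub: "{a..x} \<subseteq> {a..b}" using assms(4) by auto
  have "f integrable_on {a..x}" "g integrable_on {a..x}"
    using integrable_continuous_interval[OF continuous_on_subset[OF assms(1) sub]]
      integrable_continuous_interval[OF continuous_on_subset[OF assms(2) sub]] by auto
  then have "(\<lambda>t. B * f t) integrable_on {a..x}" "(\<lambda>t. A * g t) integrable_on {a..x}"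
    using integrable_on_cmult_left[of f "{a..x}" B] integrable_on_cmult_left[of g "{a..x}" A] by auto
  then have "integral {a..x} (\<lambda>t. B * f t - A * g t) = integral {a..x} (\<lambda>t. B * f t) - integral {a..x} (\<lambda>t. A * g t)"
    by (rule integral_diff)
  then show ?thesis by simp
qed

theorem mainTheorem12:
  fixes f g :: "real \<Rightarrow> real" and a b f' g' :: real
  assumes "a < b"
    and "continuous_on {a..b} f" and "continuous_on {a..b} g"
    and "(f has_real_derivative f') (at a within {a..b})"
    and "(g has_real_derivative g') (at a within {a..b})"
    and "(f a * int_mean g a b - g a * int_mean f a b) *
         (f' * int_mean g a b - g' * int_mean f a b) > 0"
  shows "\<exists>\<eta>. a < \<eta> \<and> \<eta> < b \<and>
    int_mean g a b * (f \<eta> - int_mean f a \<eta>) = int_mean f a b * (g \<eta> - int_mean g a \<eta>)"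
proof -
  define A where "A = int_mean f a b"
  define B where "B = int_mean g a b"
  define h where "h t = B * f t - A * g t" for t
  have hc: "continuous_on {a..b} h" unfolding h_def using assms(2,3)
    by (intro continuous_intros) auto
  have hd: "(h has_real_derivative (B * f' - A * g')) (at a within {a..b})"
    unfolding h_def[abs_def] using assms(4,5) by (intro DERIV_diff DERIV_cmult)
  have hi: "integral {a..x} h = B * integral {a..x} f - A * integral {a..x} g" if "a \<le> x" "x \<le> b" for x
    unfolding h_def using int_lin[OF assms(2,3) that] .
  have z: "integral {a..b} h = 0"
    using hi[of b] assms(1) unfolding A_def B_def int_mean_def by simp
  have prod: "h a * (B * f' - A * g') > 0" using assms(6) unfolding h_def A_def B_def
    by (simp add: algebra_simps)
  have "\<exists>\<eta>. a < \<eta> \<and> \<eta> < b \<and> h \<eta> = integral {a..\<eta>} h / (\<eta> - a)"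
  proof (cases "h a > 0")
    case True
    then have "B * f' - A * g' > 0" using prod by (simp add: zero_less_mult_iff)
    then show ?thesis using key[OF assms(1) hc hd True] z by blast
  next
    case False
    then have n: "h a < 0" "B * f' - A * g' < 0" using prod by (auto simp: zero_less_mult_iff)
    have hc': "continuous_on {a..b} (\<lambda>t. - h t)" using hc by (intro continuous_intros)
    have hd': "((\<lambda>t. - h t) has_real_derivative - (B * f' - A * g')) (at a within {a..b})"
      using hd by (rule DERIV_minus)
    have z': "integral {a..b} (\<lambda>t. - h t) = 0" using z by (simp add: integral_neg)
    obtain \<eta> where "a < \<eta>" "\<eta> < b" "- h \<eta> = integral {a..\<eta>} (\<lambda>t. - h t) / (\<eta> - a)"
      using key[OF assms(1) hc' hd' _ _ z'] n by auto
    then show ?thesis by (intro exI[of _ \<eta>]) (auto simp: integral_neg)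
  qed
  then obtain \<eta> where e: "a < \<eta>" "\<eta> < b" "h \<eta> = integral {a..\<eta>} h / (\<eta> - a)" by blast
  then have "B * f \<eta> - A * g \<eta> = (B * integral {a..\<eta>} f - A * integral {a..\<eta>} g) / (\<eta> - a)"
    using hi[of \<eta>] unfolding h_def by simp
  then have "B * (f \<eta> - int_mean f a \<eta>) = A * (g \<eta> - int_mean g a \<eta>)"
    using e(1) unfolding int_mean_def by (simp add: field_simps)
  then show ?thesis using e unfolding A_def B_def by blast
qed

end
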